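(* Let $G$ be a finitely generated torsion-free nilpotent group with two decompositions $\overline{G}=R_1\times\cdots\times R_m=K_1\times\cdots\times K_m$ into nontrivial rationally indecomposable rational subgroups, ordered so that for each $i$ the restriction of the projection $\alpha_i:\overline{G}\to R_i$ to $K_i$ is an isomorphism $K_i\to R_i$ with inverse the restriction to $R_i$ of the projection $\beta_i:\overline{G}\to K_i$, and $\overline{G}=R_1\times\cdots\times R_{i-1}\times K_i\times R_{i+1}\times\cdots\times R_m$. For each $i$ define $\Theta_i:\overline{G}\to\overline{G}$ by $\Theta_i(r_1r_2\cdots r_m)=r_1\cdots r_{i-1}\,\beta_i(r_i)\,r_{i+1}\cdots r_m$ for $r_j\in R_j$. Then $\Theta_i$ is a normal automorphism of $\overline{G}$.
   Context: An automorphism $\theta$ of a group $H$ is normal if $\theta(x^y)=(\theta(x))^y$ for all $x,y\in H$, where $x^y=y^{-1}xy$. Rational closure, rational subgroup and rational indecomposability: $\overline{G}$ is the Malcev completion of $G$ (torsion-free nilpotent, uniquely divisible, containing $G$, every element having a positive power in $G$); a subgroup is rational if closed under taking $n$-th roots for all $n\ge1$; rationally indecomposable means not a direct product of two nontrivial rational subgroups. *)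

theory Defs
  imports "HOL-Algebra.Algebra"
begin

fun lower_central :: "('a, 'b) monoid_scheme \<Rightarrow> nat \<Rightarrow> 'a set" where
  "lower_central G 0 = carrier G"
| "lower_central G (Suc k) = generate G
     (\<Union>x \<in> lower_central G k. \<Union>y \<in> carrier G.
        { x \<otimes>\<^bsub>G\<^esub> y \<otimes>\<^bsub>G\<^esub> inv\<^bsub>G\<^esub> x \<otimes>\<^bsub>G\<^esub> inv\<^bsub>G\<^esub> y })"

definition nilpotent_group :: "('a, 'b) monoid_scheme \<Rightarrow> bool" where
  "nilpotent_group G \<longleftrightarrow> group G \<and> (\<exists>c. lower_central G c = {\<one>\<^bsub>G\<^esub>})"

definition torsion_free :: "('a, 'b) monoid_scheme \<Rightarrow> bool" where
  "torsion_free G \<longleftrightarrow> (\<forall>x \<in> carrier G. \<forall>n::nat. n \<ge> 1 \<longrightarrow> x [^]\<^bsub>G\<^esub> n = \<one>\<^bsub>G\<^esub> \<longrightarrow> x = \<one>\<^bsub>G\<^esub>)"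

definition finitely_generated :: "('a, 'b) monoid_scheme \<Rightarrow> bool" where
  "finitely_generated G \<longleftrightarrow> (\<exists>S. finite S \<and> S \<subseteq> carrier G \<and> generate G S = carrier G)"

definition uniquely_divisible :: "('a, 'b) monoid_scheme \<Rightarrow> bool" where
  "uniquely_divisible G \<longleftrightarrow>
     (\<forall>x \<in> carrier G. \<forall>n::nat. n \<ge> 1 \<longrightarrow> (\<exists>!y. y \<in> carrier G \<and> y [^]\<^bsub>G\<^esub> n = x))"

text \<open>Gb is a Malcev completion of its subgroup H (the group G of the paper, realised
  as a subgroup of Gb): Gb torsion-free nilpotent, uniquely divisible, contains H,
  every element of Gb has a positive power in H.\<close>
definition malcev_completion :: "('a, 'b) monoid_scheme \<Rightarrow> 'a set \<Rightarrow> bool" where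
  "malcev_completion Gb H \<longleftrightarrow> group Gb \<and> nilpotent_group Gb \<and> torsion_free Gb
     \<and> uniquely_divisible Gb \<and> subgroup H Gb
     \<and> (\<forall>x \<in> carrier Gb. \<exists>n::nat. n \<ge> 1 \<and> x [^]\<^bsub>Gb\<^esub> n \<in> H)"

definition rational_subgroup :: "('a, 'b) monoid_scheme \<Rightarrow> 'a set \<Rightarrow> bool" where
  "rational_subgroup G A \<longleftrightarrow> subgroup A G \<and>
     (\<forall>x \<in> carrier G. \<forall>n::nat. n \<ge> 1 \<longrightarrow> x [^]\<^bsub>G\<^esub> n \<in> A \<longrightarrow> x \<in> A)"

definition prodl :: "('a, 'b) monoid_scheme \<Rightarrow> (nat \<Rightarrow> 'a) \<Rightarrow> nat \<Rightarrow> 'a" where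
  "prodl G r m = foldr (\<lambda>j acc. r j \<otimes>\<^bsub>G\<^esub> acc) [0..<m] \<one>\<^bsub>G\<^esub>"

definition is_decomp :: "('a, 'b) monoid_scheme \<Rightarrow> nat \<Rightarrow> (nat \<Rightarrow> 'a set) \<Rightarrow> 'a \<Rightarrow> (nat \<Rightarrow> 'a) \<Rightarrow> bool" where
  "is_decomp G m R g r \<longleftrightarrow> (\<forall>j<m. r j \<in> R j) \<and> (\<forall>j\<ge>m. r j = \<one>\<^bsub>G\<^esub>) \<and> g = prodl G r m"

definition internal_direct_product ::
    "('a, 'b) monoid_scheme \<Rightarrow> 'a set \<Rightarrow> nat \<Rightarrow> (nat \<Rightarrow> 'a set) \<Rightarrow> bool" where
  "internal_direct_product G H m R \<longleftrightarrow>
     (\<forall>i<m. subgroup (R i) G \<and> R i \<subseteq> H)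
     \<and> (\<forall>i<m. \<forall>j<m. i \<noteq> j \<longrightarrow> (\<forall>x \<in> R i. \<forall>y \<in> R j. x \<otimes>\<^bsub>G\<^esub> y = y \<otimes>\<^bsub>G\<^esub> x))
     \<and> (\<forall>g \<in> H. \<exists>!r. is_decomp G m R g r)"

definition rationally_indecomposable :: "('a, 'b) monoid_scheme \<Rightarrow> 'a set \<Rightarrow> bool" where
  "rationally_indecomposable G A \<longleftrightarrow>
     \<not> (\<exists>B C. rational_subgroup G B \<and> rational_subgroup G C
          \<and> B \<noteq> {\<one>\<^bsub>G\<^esub>} \<and> C \<noteq> {\<one>\<^bsub>G\<^esub>}
          \<and> internal_direct_product G A 2 (\<lambda>i. if i = 0 then B else C))"

definition components :: "('a, 'b) monoid_scheme \<Rightarrow> nat \<Rightarrow> (nat \<Rightarrow> 'a set) \<Rightarrow> 'a \<Rightarrow> (nat \<Rightarrow> 'a)" where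
  "components G m R g = (THE r. is_decomp G m R g r)"

definition proj :: "('a, 'b) monoid_scheme \<Rightarrow> nat \<Rightarrow> (nat \<Rightarrow> 'a set) \<Rightarrow> nat \<Rightarrow> 'a \<Rightarrow> 'a" where
  "proj G m R i g = components G m R g i"

definition Theta :: "('a, 'b) monoid_scheme \<Rightarrow> nat \<Rightarrow> (nat \<Rightarrow> 'a set) \<Rightarrow> (nat \<Rightarrow> 'a set) \<Rightarrow> nat \<Rightarrow> 'a \<Rightarrow> 'a" where
  "Theta G m R K i = (\<lambda>g \<in> carrier G.
     (let r = components G m R g in prodl G (r(i := proj G m K i (r i))) m))"

definition normal_automorphism :: "('a, 'b) monoid_scheme \<Rightarrow> ('a \<Rightarrow> 'a) \<Rightarrow> bool" where
  "normal_automorphism G \<theta> \<longleftrightarrow> \<theta> \<in> auto G \<and>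
     (\<forall>x \<in> carrier G. \<forall>y \<in> carrier G.
        \<theta> (inv\<^bsub>G\<^esub> y \<otimes>\<^bsub>G\<^esub> x \<otimes>\<^bsub>G\<^esub> y) = inv\<^bsub>G\<^esub> y \<otimes>\<^bsub>G\<^esub> \<theta> x \<otimes>\<^bsub>G\<^esub> y)"

end

theory Submission
  imports Defs
begin

definition P :: "('a, 'b) monoid_scheme \<Rightarrow> nat list \<Rightarrow> (nat \<Rightarrow> 'a) \<Rightarrow> 'a" where
  "P G xs r = foldr (\<lambda>j acc. r j \<otimes>\<^bsub>G\<^esub> acc) xs \<one>\<^bsub>G\<^esub>"

lemma prodl_P: "prodl G r m = P G [0..<m] r"
  by (simp add: prodl_def P_def)

lemma P_Nil[simp]: "P G [] r = \<one>\<^bsub>G\<^esub>" and P_Cons[simp]: "P G (a#xs) r = r a \<otimes>\<^bsub>G\<^esub> P G xs r"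
  by (simp_all add: P_def)

context group begin

lemma P_closed: "(\<forall>j\<in>set xs. r j \<in> carrier G) \<Longrightarrow> P G xs r \<in> carrier G"
  by (induction xs) auto

lemma P_cong: "(\<forall>j\<in>set xs. r j = s j) \<Longrightarrow> P G xs r = P G xs s"
  by (induction xs) auto

lemma comm_P:
  assumes "x \<in> carrier G" "\<forall>j\<in>set xs. r j \<in> carrier G \<and> x \<otimes> r j = r j \<otimes> x"
  shows "x \<otimes> P G xs r = P G xs r \<otimes> x"
  using assms(2)
proof (induction xs)
  case Nil then show ?case using assms(1) by simp
next
  case (Cons a xs)
  have ra: "r a \<in> carrier G" "x \<otimes> r a = r a \<otimes> x" using Cons.prems by auto
  have Pc: "P G xs r \<in> carrier G" using Cons.prems by (auto intro: P_closed)
  have IH: "x \<otimes> P G xs r = P G xs r \<otimes> x" using Cons by auto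
  have "x \<otimes> (r a \<otimes> P G xs r) = (x \<otimes> r a) \<otimes> P G xs r" using ra(1) Pc assms(1) by (simp only: m_assoc)
  also have "\<dots> = (r a \<otimes> x) \<otimes> P G xs r" using ra(2) by simp
  also have "\<dots> = r a \<otimes> (x \<otimes> P G xs r)" using ra(1) Pc assms(1) by (simp only: m_assoc)
  also have "\<dots> = r a \<otimes> (P G xs r \<otimes> x)" using IH by simp
  also have "\<dots> = (r a \<otimes> P G xs r) \<otimes> x" using ra(1) Pc assms(1) by (simp only: m_assoc)
  finally show ?case by simp
qed

lemma P_mult:
  assumes "distinct xs" "\<forall>j\<in>set xs. r j \<in> carrier G \<and> s j \<in> carrier G"
    "\<forall>a\<in>set xs. \<forall>b\<in>set xs. a \<noteq> b \<longrightarrow> s a \<otimes> r b = r b \<otimes> s a"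
  shows "P G xs r \<otimes> P G xs s = P G xs (\<lambda>j. r j \<otimes> s j)"
  using assms
proof (induction xs)
  case Nil then show ?case by simp
next
  case (Cons a xs)
  have c: "r a \<in> carrier G" "s a \<in> carrier G" using Cons.prems by auto
  have Pr: "P G xs r \<in> carrier G" "P G xs s \<in> carrier G" using Cons.prems by (auto intro: P_closed)
  have sc: "s a \<otimes> P G xs r = P G xs r \<otimes> s a"
    using Cons.prems by (intro comm_P) auto
  have IH: "P G xs r \<otimes> P G xs s = P G xs (\<lambda>j. r j \<otimes> s j)" using Cons by auto
  have "(r a \<otimes> P G xs r) \<otimes> (s a \<otimes> P G xs s) = r a \<otimes> ((P G xs r \<otimes> s a) \<otimes> P G xs s)"
    using c Pr by (simp add: m_assoc)
  also have "\<dots> = r a \<otimes> ((s a \<otimes> P G xs r) \<otimes> P G xs s)" by (simp add: sc)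
  also have "\<dots> = (r a \<otimes> s a) \<otimes> (P G xs r \<otimes> P G xs s)" using c Pr by (simp add: m_assoc)
  finally show ?case using IH by simp
qed

lemma P_split:
  assumes "distinct xs" "i \<in> set xs" "\<forall>j\<in>set xs. r j \<in> carrier G"
    "\<forall>j\<in>set xs. j \<noteq> i \<longrightarrow> r i \<otimes> r j = r j \<otimes> r i"
  shows "P G xs r = r i \<otimes> P G xs (r(i:=\<one>))"
  using assms
proof (induction xs)
  case Nil then show ?case by simp
next
  case (Cons a xs)
  show ?case
  proof (cases "a = i")
    case True
    then have "i \<notin> set xs" using Cons.prems by auto
    then have "P G xs (r(i:=\<one>)) = P G xs r" by (intro P_cong) auto
    moreover have "P G xs r \<in> carrier G" using Cons.prems by (intro P_closed) auto
    ultimately show ?thesis using True by (simp del: fun_upd_apply add: fun_upd_same)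
  next
    case False
    have c: "r a \<in> carrier G" "r i \<in> carrier G" using Cons.prems by auto
    have IH: "P G xs r = r i \<otimes> P G xs (r(i:=\<one>))" apply (rule Cons.IH) using Cons.prems False by auto
    have Pc: "P G xs (r(i:=\<one>)) \<in> carrier G" using Cons.prems by (intro P_closed) auto
    have cm: "r a \<otimes> r i = r i \<otimes> r a" using Cons.prems False by auto
    have "r a \<otimes> P G xs r = (r a \<otimes> r i) \<otimes> P G xs (r(i:=\<one>))" using IH c Pc by (simp add: m_assoc)
    also have "\<dots> = r i \<otimes> (r a \<otimes> P G xs (r(i:=\<one>)))" using cm c Pc by (simp add: m_assoc)
    finally show ?thesis using False by (simp del: fun_upd_apply add: fun_upd_other)
  qed
qed

lemma comm_inv: "x \<in> carrier G \<Longrightarrow> u \<in> carrier G \<Longrightarrow> x \<otimes> u = u \<otimes> x \<Longrightarrow> inv x \<otimes> u = u \<otimes> inv x"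
proof -
  assume a: "x \<in> carrier G" "u \<in> carrier G" "x \<otimes> u = u \<otimes> x"
  have "inv x \<otimes> u = inv x \<otimes> (u \<otimes> x) \<otimes> inv x" using a(1,2) by (simp add: m_assoc)
  also have "\<dots> = inv x \<otimes> (x \<otimes> u) \<otimes> inv x" using a by simp
  also have "\<dots> = u \<otimes> inv x" using a(1,2) by (simp add: m_assoc[symmetric])
  finally show ?thesis .
qed

lemma conj_central:
  assumes "c \<in> carrier G" "a \<in> carrier G" "b \<in> carrier G" "c \<otimes> b = b \<otimes> c"
  shows "inv (c \<otimes> a) \<otimes> b \<otimes> (c \<otimes> a) = inv a \<otimes> b \<otimes> a"
proof -
  have e1: "inv (c \<otimes> a) \<otimes> b \<otimes> (c \<otimes> a) = inv a \<otimes> (inv c \<otimes> (b \<otimes> c)) \<otimes> a"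
    using assms(1-3) by (simp add: inv_mult_group m_assoc)
  have "inv c \<otimes> (b \<otimes> c) = b" using assms
    by (metis inv_closed l_inv l_one m_assoc)
  then show ?thesis using e1 by simp
qed


lemma idp_sub: "internal_direct_product G (carrier G) m D \<Longrightarrow> i < m \<Longrightarrow> subgroup (D i) G"
  by (simp add: internal_direct_product_def)

lemma idp_in: "internal_direct_product G (carrier G) m D \<Longrightarrow> i < m \<Longrightarrow> x \<in> D i \<Longrightarrow> x \<in> carrier G"
  using idp_sub subgroup.subset by blast

lemma idp_comm: "internal_direct_product G (carrier G) m D \<Longrightarrow> i < m \<Longrightarrow> j < m \<Longrightarrow> i \<noteq> j
   \<Longrightarrow> x \<in> D i \<Longrightarrow> y \<in> D j \<Longrightarrow> x \<otimes> y = y \<otimes> x"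
  unfolding internal_direct_product_def by blast

lemma comp_decomp: "internal_direct_product G (carrier G) m D \<Longrightarrow> g \<in> carrier G
   \<Longrightarrow> is_decomp G m D g (components G m D g)"
proof -
  assume a: "internal_direct_product G (carrier G) m D" "g \<in> carrier G"
  then have "\<exists>!r. is_decomp G m D g r" unfolding internal_direct_product_def by blast
  then show ?thesis unfolding components_def by (rule theI')
qed

lemma comp_unique: "internal_direct_product G (carrier G) m D \<Longrightarrow> g \<in> carrier G
   \<Longrightarrow> is_decomp G m D g r \<Longrightarrow> components G m D g = r"
proof -
  assume a: "internal_direct_product G (carrier G) m D" "g \<in> carrier G" "is_decomp G m D g r"
  then have "\<exists>!r. is_decomp G m D g r" unfolding internal_direct_product_def by blast
  then show ?thesis unfolding components_def by (rule the1_equality[where P="is_decomp G m D g", OF _ a(3)])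
qed

lemma prodl_closed: "internal_direct_product G (carrier G) m D \<Longrightarrow> (\<forall>j<m. r j \<in> D j)
   \<Longrightarrow> prodl G r m \<in> carrier G"
  unfolding prodl_P by (rule P_closed) (auto intro: idp_in)

lemma prodl_decomp: "internal_direct_product G (carrier G) m D \<Longrightarrow> (\<forall>j<m. r j \<in> D j)
   \<Longrightarrow> (\<forall>j\<ge>m. r j = \<one>) \<Longrightarrow> components G m D (prodl G r m) = r"
  by (rule comp_unique) (auto simp: is_decomp_def intro: prodl_closed)

lemma comp_in: "internal_direct_product G (carrier G) m D \<Longrightarrow> g \<in> carrier G \<Longrightarrow> j < m
   \<Longrightarrow> components G m D g j \<in> D j"
  using comp_decomp[of m D g] unfolding is_decomp_def by blast

lemma comp_out: "internal_direct_product G (carrier G) m D \<Longrightarrow> g \<in> carrier G \<Longrightarrow> \<not> j < m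
   \<Longrightarrow> components G m D g j = \<one>"
  using comp_decomp[of m D g] unfolding is_decomp_def by simp

lemma comp_prod: "internal_direct_product G (carrier G) m D \<Longrightarrow> g \<in> carrier G
   \<Longrightarrow> prodl G (components G m D g) m = g"
  using comp_decomp[of m D g] unfolding is_decomp_def by simp

lemma comp_mult:
  assumes D: "internal_direct_product G (carrier G) m D" and g: "g \<in> carrier G" and h: "h \<in> carrier G"
  shows "components G m D (g \<otimes> h) = (\<lambda>j. components G m D g j \<otimes> components G m D h j)"
proof -
  let ?r = "components G m D g" and ?s = "components G m D h"
  have "prodl G ?r m \<otimes> prodl G ?s m = prodl G (\<lambda>j. ?r j \<otimes> ?s j) m"
    unfolding prodl_P
    by (rule P_mult) (auto intro: idp_in[OF D _ comp_in[OF D]] g h idp_comm[OF D _ _ _ comp_in[OF D] comp_in[OF D]])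
  then have e: "g \<otimes> h = prodl G (\<lambda>j. ?r j \<otimes> ?s j) m" using comp_prod[OF D g] comp_prod[OF D h] by simp
  show ?thesis unfolding e
  proof (rule prodl_decomp[OF D])
    show "\<forall>j<m. ?r j \<otimes> ?s j \<in> D j"
      using subgroup.m_closed[OF idp_sub[OF D]] comp_in[OF D g] comp_in[OF D h] by blast
    show "\<forall>j\<ge>m. ?r j \<otimes> ?s j = \<one>"
      using comp_out[OF D g] comp_out[OF D h] by simp
  qed
qed

lemma proj_in: "internal_direct_product G (carrier G) m D \<Longrightarrow> g \<in> carrier G \<Longrightarrow> i < m
   \<Longrightarrow> proj G m D i g \<in> D i"
  unfolding proj_def by (rule comp_in)

lemma proj_mult: "internal_direct_product G (carrier G) m D \<Longrightarrow> g \<in> carrier G \<Longrightarrow> h \<in> carrier G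
   \<Longrightarrow> proj G m D i (g \<otimes> h) = proj G m D i g \<otimes> proj G m D i h"
  unfolding proj_def by (simp add: comp_mult)

end
theorem mainTheorem6:
  fixes Gb :: "('a, 'b) monoid_scheme" and G :: "'a set"
    and R K :: "nat \<Rightarrow> 'a set" and m :: nat
  assumes grp: "group Gb"
    and malcev: "malcev_completion Gb G"
    and fg: "finitely_generated (Gb\<lparr>carrier := G\<rparr>)"
    and tf: "torsion_free (Gb\<lparr>carrier := G\<rparr>)"
    and nil: "nilpotent_group (Gb\<lparr>carrier := G\<rparr>)"
    and decR: "internal_direct_product Gb (carrier Gb) m R"
    and decK: "internal_direct_product Gb (carrier Gb) m K"
    and R_good: "\<And>i. i < m \<Longrightarrow> R i \<noteq> {\<one>\<^bsub>Gb\<^esub>} \<and> rational_subgroup Gb (R i)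
                                 \<and> rationally_indecomposable Gb (R i)"
    and K_good: "\<And>i. i < m \<Longrightarrow> K i \<noteq> {\<one>\<^bsub>Gb\<^esub>} \<and> rational_subgroup Gb (K i)
                                 \<and> rationally_indecomposable Gb (K i)"
    and alpha_iso: "\<And>i. i < m \<Longrightarrow>
        proj Gb m R i \<in> iso (Gb\<lparr>carrier := K i\<rparr>) (Gb\<lparr>carrier := R i\<rparr>)"
    and beta_inv: "\<And>i. i < m \<Longrightarrow>
        (\<forall>x \<in> K i. proj Gb m K i (proj Gb m R i x) = x)
      \<and> (\<forall>y \<in> R i. proj Gb m R i (proj Gb m K i y) = y)"
    and exchange: "\<And>i. i < m \<Longrightarrow> internal_direct_product Gb (carrier Gb) m (R(i := K i))"
    and i: "i < m"
  shows "normal_automorphism Gb (Theta Gb m R K i)"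
proof -
  interpret group Gb by (rule grp)
  define T where "T = Theta Gb m R K i"
  define R' where "R' = R(i := K i)"
  define cR where "cR = components Gb m R"
  define \<beta> where "\<beta> = proj Gb m K i"
  define \<alpha> where "\<alpha> = proj Gb m R i"
  define f where "f g = (cR g)(i := \<beta> (cR g i))" for g
  have R'idp: "internal_direct_product Gb (carrier Gb) m R'" unfolding R'_def by (rule exchange[OF i])
  have Tg: "T g = prodl Gb (f g) m" if "g \<in> carrier Gb" for g
    using that unfolding T_def Theta_def f_def cR_def \<beta>_def by (simp add: Let_def)
  have cRc: "cR g j \<in> carrier Gb" if "g \<in> carrier Gb" for g j
    using that comp_in[OF decR] comp_out[OF decR] idp_in[OF decR] unfolding cR_def by (metis one_closed)
  have fin: "\<forall>j<m. f g j \<in> R' j" if "g \<in> carrier Gb" for g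
    using that proj_in[OF decK _ i] comp_in[OF decR] cRc unfolding f_def R'_def \<beta>_def cR_def by auto
  have fout: "\<forall>j\<ge>m. f g j = \<one>\<^bsub>Gb\<^esub>" if "g \<in> carrier Gb" for g
    using that i comp_out[OF decR] unfolding f_def cR_def by auto
  have Tc: "T g \<in> carrier Gb" if "g \<in> carrier Gb" for g
    using that Tg fin prodl_closed[OF R'idp] by auto
  have compT: "components Gb m R' (T g) = f g" if "g \<in> carrier Gb" for g
    using that Tg fin fout prodl_decomp[OF R'idp] by auto
  have fmult: "f (g \<otimes>\<^bsub>Gb\<^esub> h) = (\<lambda>j. f g j \<otimes>\<^bsub>Gb\<^esub> f h j)" if "g \<in> carrier Gb" "h \<in> carrier Gb" for g h
    using that comp_mult[OF decR] proj_mult[OF decK] cRc unfolding f_def cR_def \<beta>_def by auto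
  have Tmult: "T (g \<otimes>\<^bsub>Gb\<^esub> h) = T g \<otimes>\<^bsub>Gb\<^esub> T h" if g: "g \<in> carrier Gb" and h: "h \<in> carrier Gb" for g h
  proof -
    have "T (g \<otimes>\<^bsub>Gb\<^esub> h) = prodl Gb (\<lambda>j. f g j \<otimes>\<^bsub>Gb\<^esub> f h j) m" using g h Tg fmult by simp
    also have "(\<lambda>j. f g j \<otimes>\<^bsub>Gb\<^esub> f h j) = components Gb m R' (T g \<otimes>\<^bsub>Gb\<^esub> T h)"
      using comp_mult[OF R'idp Tc[OF g] Tc[OF h]] compT g h by simp
    also have "prodl Gb \<dots> m = T g \<otimes>\<^bsub>Gb\<^esub> T h" using comp_prod[OF R'idp] Tc g h by simp
    finally show ?thesis .
  qed
  have homT: "T \<in> hom Gb Gb" using Tc Tmult by (intro homI) auto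
  have injT: "inj_on T (carrier Gb)"
  proof (rule inj_onI)
    fix g h assume g: "g \<in> carrier Gb" and h: "h \<in> carrier Gb" and e: "T g = T h"
    have fe: "f g = f h" using compT g h e by metis
    have "cR g = cR h"
    proof
      fix j show "cR g j = cR h j"
      proof (cases "j = i")
        case True
        have "\<beta> (cR g i) = \<beta> (cR h i)" using fe unfolding f_def by (metis fun_upd_same)
        then have "\<alpha> (\<beta> (cR g i)) = \<alpha> (\<beta> (cR h i))" by simp
        moreover have "cR g i \<in> R i" "cR h i \<in> R i" using comp_in[OF decR] g h i unfolding cR_def by auto
        ultimately show ?thesis using beta_inv[OF i] True unfolding \<alpha>_def \<beta>_def by simp
      next
        case False
        then show ?thesis using fe unfolding f_def by (metis fun_upd_other)
      qed
    qed
    then show "g = h" using comp_prod[OF decR] g h unfolding cR_def by metis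
  qed
  have surjT: "T ` carrier Gb = carrier Gb"
  proof
    show "T ` carrier Gb \<subseteq> carrier Gb" using Tc by auto
    show "carrier Gb \<subseteq> T ` carrier Gb"
    proof
      fix t assume t: "t \<in> carrier Gb"
      define s where "s = components Gb m R' t"
      define r where "r = s(i := \<alpha> (s i))"
      have si: "s i \<in> K i" using comp_in[OF R'idp t i] unfolding s_def R'_def by simp
      have sic: "s i \<in> carrier Gb" using si idp_in[OF decK i] by auto
      have rin: "\<forall>j<m. r j \<in> R j"
      proof (intro allI impI)
        fix j assume j: "j < m"
        show "r j \<in> R j"
        proof (cases "j = i")
          case True then show ?thesis using proj_in[OF decR sic i] unfolding r_def \<alpha>_def by simp
        next
          case False then show ?thesis using comp_in[OF R'idp t j] unfolding r_def s_def R'_def by simp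
        qed
      qed
      have rout: "\<forall>j\<ge>m. r j = \<one>\<^bsub>Gb\<^esub>" using comp_out[OF R'idp t] i unfolding r_def s_def by auto
      define g where "g = prodl Gb r m"
      have gc: "g \<in> carrier Gb" unfolding g_def using prodl_closed[OF decR rin] .
      have cg: "cR g = r" unfolding cR_def g_def using prodl_decomp[OF decR rin rout] .
      have "f g = s" unfolding f_def cg r_def using beta_inv[OF i] si unfolding \<alpha>_def \<beta>_def by auto
      then have "T g = t" using Tg[OF gc] comp_prod[OF R'idp t] unfolding s_def by simp
      then show "t \<in> T ` carrier Gb" using gc by blast
    qed
  qed
  have extT: "T \<in> extensional (carrier Gb)" unfolding T_def Theta_def by simp
  have autoT: "T \<in> auto Gb"
    unfolding auto_def Bij_def using homT injT surjT extT by (auto simp: bij_betw_def)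
  have GH: "group_hom Gb Gb T" using homT grp by (simp add: group_hom_def group_hom_axioms_def)
  have central: "\<exists>c\<in>carrier Gb. y = c \<otimes>\<^bsub>Gb\<^esub> T y \<and> (\<forall>z\<in>carrier Gb. c \<otimes>\<^bsub>Gb\<^esub> z = z \<otimes>\<^bsub>Gb\<^esub> c)"
    if y: "y \<in> carrier Gb" for y
  proof -
    define r where "r = cR y"
    define k where "k = \<beta> (r i)"
    have rc: "\<forall>j. r j \<in> carrier Gb" using cRc y unfolding r_def by auto
    have ri: "r i \<in> R i" using comp_in[OF decR y i] unfolding r_def cR_def .
    have kK: "k \<in> K i" unfolding k_def \<beta>_def using proj_in[OF decK _ i] rc by auto
    have kc: "k \<in> carrier Gb" using idp_in[OF decK i kK] .
    define w where "w = prodl Gb (r(i := \<one>\<^bsub>Gb\<^esub>)) m"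
    have wc: "w \<in> carrier Gb" unfolding w_def prodl_P using rc by (intro P_closed) auto
    have y1: "y = r i \<otimes>\<^bsub>Gb\<^esub> w"
    proof -
      have "y = prodl Gb r m" using comp_prod[OF decR y] unfolding r_def cR_def by simp
      also have "\<dots> = r i \<otimes>\<^bsub>Gb\<^esub> w" unfolding prodl_P w_def
        using rc i comp_in[OF decR y] idp_comm[OF decR] unfolding r_def cR_def
        by (intro P_split) auto
      finally show ?thesis .
    qed
    have T1: "T y = k \<otimes>\<^bsub>Gb\<^esub> w"
    proof -
      have fy: "f y = r(i := k)" unfolding f_def r_def k_def ..
      have "T y = P Gb [0..<m] (r(i := k))" using Tg[OF y] fy prodl_P by metis
      also have "\<dots> = (r(i := k)) i \<otimes>\<^bsub>Gb\<^esub> P Gb [0..<m] ((r(i := k))(i := \<one>\<^bsub>Gb\<^esub>))"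
      proof (rule P_split)
        show "\<forall>j\<in>set [0..<m]. j \<noteq> i \<longrightarrow> (r(i := k)) i \<otimes>\<^bsub>Gb\<^esub> (r(i := k)) j = (r(i := k)) j \<otimes>\<^bsub>Gb\<^esub> (r(i := k)) i"
        proof (intro ballI impI)
          fix j assume "j \<in> set [0..<m]" "j \<noteq> i"
          then have "j < m" "r j \<in> R j" using comp_in[OF decR y] unfolding r_def cR_def by auto
          then show "(r(i := k)) i \<otimes>\<^bsub>Gb\<^esub> (r(i := k)) j = (r(i := k)) j \<otimes>\<^bsub>Gb\<^esub> (r(i := k)) i"
            using idp_comm[OF R'idp i \<open>j < m\<close>, of k "r j"] kK \<open>j \<noteq> i\<close> unfolding R'_def by auto
        qed
      qed (use i rc kc in auto)
      also have "\<dots> = k \<otimes>\<^bsub>Gb\<^esub> w" unfolding w_def prodl_P by simp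
      finally show ?thesis .
    qed
    define c where "c = r i \<otimes>\<^bsub>Gb\<^esub> inv\<^bsub>Gb\<^esub> k"
    have cc: "c \<in> carrier Gb" unfolding c_def using rc kc by auto
    have kk: "inv\<^bsub>Gb\<^esub> k \<otimes>\<^bsub>Gb\<^esub> (k \<otimes>\<^bsub>Gb\<^esub> w) = w" using kc wc by (simp add: m_assoc[symmetric])
    have yc: "y = c \<otimes>\<^bsub>Gb\<^esub> T y" unfolding T1 c_def using y1 rc kc wc kk by (simp add: m_assoc)
    define \<rho> where "\<rho> = cR k"
    have \<rho>i: "\<rho> i = r i" using beta_inv[OF i] ri unfolding \<rho>_def cR_def k_def \<alpha>_def \<beta>_def proj_def by simp
    have \<rho>c: "\<forall>j. \<rho> j \<in> carrier Gb" using cRc kc unfolding \<rho>_def by auto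
    define w' where "w' = prodl Gb (\<rho>(i := \<one>\<^bsub>Gb\<^esub>)) m"
    have w'c: "w' \<in> carrier Gb" unfolding w'_def prodl_P using \<rho>c by (intro P_closed) auto
    have k1: "k = r i \<otimes>\<^bsub>Gb\<^esub> w'"
    proof -
      have "k = prodl Gb \<rho> m" using comp_prod[OF decR kc] unfolding \<rho>_def cR_def by simp
      also have "\<dots> = \<rho> i \<otimes>\<^bsub>Gb\<^esub> w'" unfolding prodl_P w'_def
        using \<rho>c i comp_in[OF decR kc] idp_comm[OF decR] unfolding \<rho>_def cR_def
        by (intro P_split) auto
      finally show ?thesis using \<rho>i by simp
    qed
    have wcomm: "w' \<otimes>\<^bsub>Gb\<^esub> u = u \<otimes>\<^bsub>Gb\<^esub> w'" if u: "u \<in> R i" for u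
    proof -
      have j: "i < m" by (rule i)
      have uc: "u \<in> carrier Gb" using idp_in[OF decR j u] .
      have "w' \<otimes>\<^bsub>Gb\<^esub> u = u \<otimes>\<^bsub>Gb\<^esub> w'"
        unfolding w'_def prodl_P
      proof (rule comm_P[symmetric])
        show "\<forall>ja\<in>set [0..<m]. (\<rho>(i := \<one>\<^bsub>Gb\<^esub>)) ja \<in> carrier Gb \<and> u \<otimes>\<^bsub>Gb\<^esub> (\<rho>(i := \<one>\<^bsub>Gb\<^esub>)) ja = (\<rho>(i := \<one>\<^bsub>Gb\<^esub>)) ja \<otimes>\<^bsub>Gb\<^esub> u"
        proof
          fix ja assume "ja \<in> set [0..<m]"
          then have ja: "ja < m" by simp
          show "(\<rho>(i := \<one>\<^bsub>Gb\<^esub>)) ja \<in> carrier Gb \<and> u \<otimes>\<^bsub>Gb\<^esub> (\<rho>(i := \<one>\<^bsub>Gb\<^esub>)) ja = (\<rho>(i := \<one>\<^bsub>Gb\<^esub>)) ja \<otimes>\<^bsub>Gb\<^esub> u"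
          proof (cases "ja = i")
            case True then show ?thesis using uc by simp
          next
            case False
            have "\<rho> ja \<in> R ja" using comp_in[OF decR kc ja] unfolding \<rho>_def cR_def .
            then show ?thesis using idp_comm[OF decR j ja, of u "\<rho> ja"] u False \<rho>c by auto
          qed
        qed
      qed (use uc in auto)
      then show ?thesis .
    qed
    have cw: "c = inv\<^bsub>Gb\<^esub> w'"
    proof -
      have "k = w' \<otimes>\<^bsub>Gb\<^esub> r i" using k1 wcomm[OF ri] by metis
      then show ?thesis unfolding c_def using rc w'c by (simp add: inv_mult_group m_assoc[symmetric])
    qed
    have commR: "c \<otimes>\<^bsub>Gb\<^esub> u = u \<otimes>\<^bsub>Gb\<^esub> c" if j: "j < m" and u: "u \<in> R j" for j u
    proof (cases "j = i")
      case True
      have uc: "u \<in> carrier Gb" using idp_in[OF decR j u] .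
      have "w' \<otimes>\<^bsub>Gb\<^esub> u = u \<otimes>\<^bsub>Gb\<^esub> w'" using wcomm u True by simp
      then show ?thesis unfolding cw using comm_inv w'c uc by simp
    next
      case False
      have uc: "u \<in> carrier Gb" using idp_in[OF decR j u] .
      have c1: "r i \<otimes>\<^bsub>Gb\<^esub> u = u \<otimes>\<^bsub>Gb\<^esub> r i" using idp_comm[OF decR i j] False ri u by auto
      have c2: "k \<otimes>\<^bsub>Gb\<^esub> u = u \<otimes>\<^bsub>Gb\<^esub> k" using idp_comm[OF R'idp i j, of k u] False kK u unfolding R'_def by auto
      have c3: "inv\<^bsub>Gb\<^esub> k \<otimes>\<^bsub>Gb\<^esub> u = u \<otimes>\<^bsub>Gb\<^esub> inv\<^bsub>Gb\<^esub> k" using comm_inv kc uc c2 by simp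
      have "c \<otimes>\<^bsub>Gb\<^esub> u = r i \<otimes>\<^bsub>Gb\<^esub> (inv\<^bsub>Gb\<^esub> k \<otimes>\<^bsub>Gb\<^esub> u)" unfolding c_def using rc kc uc by (simp add: m_assoc)
      also have "\<dots> = (r i \<otimes>\<^bsub>Gb\<^esub> u) \<otimes>\<^bsub>Gb\<^esub> inv\<^bsub>Gb\<^esub> k" unfolding c3 using rc kc uc by (simp add: m_assoc)
      also have "\<dots> = u \<otimes>\<^bsub>Gb\<^esub> c" unfolding c1 c_def using rc kc uc by (simp add: m_assoc)
      finally show ?thesis .
    qed
    have "\<forall>z\<in>carrier Gb. c \<otimes>\<^bsub>Gb\<^esub> z = z \<otimes>\<^bsub>Gb\<^esub> c"
    proof
      fix z assume z: "z \<in> carrier Gb"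
      have "c \<otimes>\<^bsub>Gb\<^esub> P Gb [0..<m] (cR z) = P Gb [0..<m] (cR z) \<otimes>\<^bsub>Gb\<^esub> c"
        using cc cRc[OF z] commR comp_in[OF decR z] unfolding cR_def by (intro comm_P) auto
      then show "c \<otimes>\<^bsub>Gb\<^esub> z = z \<otimes>\<^bsub>Gb\<^esub> c" using comp_prod[OF decR z] unfolding prodl_P cR_def by simp
    qed
    then show ?thesis using cc yc by blast
  qed
  have normal: "T (inv\<^bsub>Gb\<^esub> y \<otimes>\<^bsub>Gb\<^esub> x \<otimes>\<^bsub>Gb\<^esub> y) = inv\<^bsub>Gb\<^esub> y \<otimes>\<^bsub>Gb\<^esub> T x \<otimes>\<^bsub>Gb\<^esub> y"
    if x: "x \<in> carrier Gb" and y: "y \<in> carrier Gb" for x y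
  proof -
    obtain c where cc: "c \<in> carrier Gb" and yc: "y = c \<otimes>\<^bsub>Gb\<^esub> T y"
      and cz: "\<forall>z\<in>carrier Gb. c \<otimes>\<^bsub>Gb\<^esub> z = z \<otimes>\<^bsub>Gb\<^esub> c" using central[OF y] by blast
    have "T (inv\<^bsub>Gb\<^esub> y \<otimes>\<^bsub>Gb\<^esub> x \<otimes>\<^bsub>Gb\<^esub> y) = inv\<^bsub>Gb\<^esub> T y \<otimes>\<^bsub>Gb\<^esub> T x \<otimes>\<^bsub>Gb\<^esub> T y"
      using Tmult x y group_hom.hom_inv[OF GH y] by simp
    also have "\<dots> = inv\<^bsub>Gb\<^esub> (c \<otimes>\<^bsub>Gb\<^esub> T y) \<otimes>\<^bsub>Gb\<^esub> T x \<otimes>\<^bsub>Gb\<^esub> (c \<otimes>\<^bsub>Gb\<^esub> T y)"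
      using conj_central[OF cc Tc[OF y] Tc[OF x]] cz Tc[OF x] by simp
    also have "\<dots> = inv\<^bsub>Gb\<^esub> y \<otimes>\<^bsub>Gb\<^esub> T x \<otimes>\<^bsub>Gb\<^esub> y" using yc by simp
    finally show ?thesis .
  qed
  show ?thesis unfolding normal_automorphism_def T_def[symmetric] using autoT normal by blast
qed

end
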